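(* Let $G$ be a graph and let $K$ be a cut-set of the complement $\overline{G}$. Then \[\chi(G) \leq \frac{1}{2} \left(\omega(G) + \Delta(G) + 1 \right) + \frac{4\chi(G[K]) + \alpha(G[K]) + 3 - \alpha(G)}{4}.\]
   Context: All graphs are finite and simple with non-empty vertex set. $\chi$ is the chromatic number, $\omega$ the clique number, $\Delta$ the maximum degree, $\alpha$ the independence number. $\overline{G}$ is the complement of $G$. A cut-set of $\overline{G}$ is a set $K$ of vertices such that $\overline{G}-K$ is disconnected; $G[K]$ is the subgraph of $G$ induced by $K$. By convention the graph on the empty vertex set has chromatic number $0$ and independence number $0$. *)

theory Defs
  imports Complex_Main
begin

text \<open>All graph parameters are taken
for the subgraph of (V,E) induced by a vertex set S.\<close>

definition simple_graph :: "'a set \<Rightarrow> ('a \<Rightarrow> 'a \<Rightarrow> bool) \<Rightarrow> bool" where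
  "simple_graph V E \<longleftrightarrow> finite V \<and> V \<noteq> {} \<and>
     (\<forall>x y. E x y \<longrightarrow> x \<in> V \<and> y \<in> V) \<and>
     (\<forall>x y. E x y \<longrightarrow> E y x) \<and> (\<forall>x. \<not> E x x)"

definition proper_colouring :: "('a \<Rightarrow> 'a \<Rightarrow> bool) \<Rightarrow> 'a set \<Rightarrow> nat \<Rightarrow> ('a \<Rightarrow> nat) \<Rightarrow> bool" where
  "proper_colouring E S k f \<longleftrightarrow> (\<forall>x\<in>S. f x < k) \<and> (\<forall>x\<in>S. \<forall>y\<in>S. E x y \<longrightarrow> f x \<noteq> f y)"

definition chi :: "('a \<Rightarrow> 'a \<Rightarrow> bool) \<Rightarrow> 'a set \<Rightarrow> nat" where
  "chi E S = (LEAST k. \<exists>f. proper_colouring E S k f)"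

definition is_clique :: "('a \<Rightarrow> 'a \<Rightarrow> bool) \<Rightarrow> 'a set \<Rightarrow> bool" where
  "is_clique E C \<longleftrightarrow> (\<forall>x\<in>C. \<forall>y\<in>C. x \<noteq> y \<longrightarrow> E x y)"

definition is_indep :: "('a \<Rightarrow> 'a \<Rightarrow> bool) \<Rightarrow> 'a set \<Rightarrow> bool" where
  "is_indep E I \<longleftrightarrow> (\<forall>x\<in>I. \<forall>y\<in>I. \<not> E x y)"

definition omega :: "('a \<Rightarrow> 'a \<Rightarrow> bool) \<Rightarrow> 'a set \<Rightarrow> nat" where
  "omega E S = Max {card C | C. C \<subseteq> S \<and> is_clique E C}"

definition alpha :: "('a \<Rightarrow> 'a \<Rightarrow> bool) \<Rightarrow> 'a set \<Rightarrow> nat" where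
  "alpha E S = Max {card I | I. I \<subseteq> S \<and> is_indep E I}"

definition degree :: "('a \<Rightarrow> 'a \<Rightarrow> bool) \<Rightarrow> 'a set \<Rightarrow> 'a \<Rightarrow> nat" where
  "degree E S v = card {u \<in> S. E v u}"

definition max_degree :: "('a \<Rightarrow> 'a \<Rightarrow> bool) \<Rightarrow> 'a set \<Rightarrow> nat" where
  "max_degree E S = Max (insert 0 (degree E S ` S))"

definition compl_adj :: "('a \<Rightarrow> 'a \<Rightarrow> bool) \<Rightarrow> 'a \<Rightarrow> 'a \<Rightarrow> bool" where
  "compl_adj E x y \<longleftrightarrow> x \<noteq> y \<and> \<not> E x y"

definition connected_in :: "('a \<Rightarrow> 'a \<Rightarrow> bool) \<Rightarrow> 'a set \<Rightarrow> 'a \<Rightarrow> 'a \<Rightarrow> bool" where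
  "connected_in A S x y \<longleftrightarrow>
     (\<exists>p. p \<noteq> [] \<and> hd p = x \<and> last p = y \<and> set p \<subseteq> S \<and>
          (\<forall>i < length p - 1. A (p ! i) (p ! Suc i)))"

definition disconnected_in :: "('a \<Rightarrow> 'a \<Rightarrow> bool) \<Rightarrow> 'a set \<Rightarrow> bool" where
  "disconnected_in A S \<longleftrightarrow> (\<exists>x\<in>S. \<exists>y\<in>S. \<not> connected_in A S x y)"

definition compl_cutset :: "'a set \<Rightarrow> ('a \<Rightarrow> 'a \<Rightarrow> bool) \<Rightarrow> 'a set \<Rightarrow> bool" where
  "compl_cutset V E K \<longleftrightarrow> K \<subseteq> V \<and> disconnected_in (compl_adj E) (V - K)"

end

theory Submission
  imports Defs
begin

locale sg =
  fixes E :: "'a \<Rightarrow> 'a \<Rightarrow> bool"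
  assumes sym: "\<And>x y. E x y \<Longrightarrow> E y x" and irr: "\<And>x. \<not> E x x"
begin

lemma chi_le: "proper_colouring E S k f \<Longrightarrow> chi E S \<le> k"
  unfolding chi_def by (rule Least_le) blast

lemma partition_colouring:
  assumes "finite P" "\<forall>B\<in>P. is_indep E B" "S \<subseteq> \<Union>P"
  shows "\<exists>f. proper_colouring E S (card P) f"
proof -
  obtain g where g: "bij_betw g P {0..<card P}" using ex_bij_betw_finite_nat[OF assms(1)] by blast
  define sl where "sl x = (SOME B. B \<in> P \<and> x \<in> B)" for x
  define f where "f x = g (sl x)" for x
  have sel: "sl x \<in> P \<and> x \<in> sl x" if "x \<in> S" for x
  proof -
    have "\<exists>B. B \<in> P \<and> x \<in> B" using that assms(3) by blast
    then show ?thesis unfolding sl_def by (rule someI_ex)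
  qed
  have "proper_colouring E S (card P) f"
    unfolding proper_colouring_def
  proof (intro conjI ballI impI)
    fix x assume "x \<in> S"
    then have "g (sl x) \<in> {0..<card P}" using sel[of x] bij_betw_apply[OF g] by blast
    then show "f x < card P" unfolding f_def by simp
  next
    fix x y assume xy: "x \<in> S" "y \<in> S" "E x y"
    show "f x \<noteq> f y"
    proof
      assume "f x = f y"
      then have "sl x = sl y"
        using sel[OF xy(1)] sel[OF xy(2)] bij_betw_imp_inj_on[OF g] unfolding f_def inj_on_def by blast
      then have "x \<in> sl x" "y \<in> sl x" "sl x \<in> P" using sel[OF xy(1)] sel[OF xy(2)] by auto
      then show False using assms(2) xy(3) unfolding is_indep_def by blast
    qed
  qed
  then show ?thesis by blast
qed

lemma colouring_exists: "finite S \<Longrightarrow> \<exists>f. proper_colouring E S (card S) f"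
proof -
  assume fin: "finite S"
  have "\<exists>f. proper_colouring E S (card ((\<lambda>x. {x}) ` S)) f"
    by (rule partition_colouring) (use fin irr in \<open>auto simp: is_indep_def\<close>)
  moreover have "card ((\<lambda>x. {x}) ` S) = card S" by (simp add: card_image)
  ultimately show ?thesis by simp
qed

lemma chi_colouring: "finite S \<Longrightarrow> \<exists>f. proper_colouring E S (chi E S) f"
  unfolding chi_def by (rule LeastI_ex) (use colouring_exists in blast)

lemma chi_union: assumes "finite S1" "finite S2"
  shows "chi E (S1 \<union> S2) \<le> chi E S1 + chi E S2"
proof -
  obtain f where f: "proper_colouring E S1 (chi E S1) f" using chi_colouring assms by blast
  obtain g where g: "proper_colouring E S2 (chi E S2) g" using chi_colouring assms by blast
  define h where "h x = (if x \<in> S1 then f x else chi E S1 + g x)" for x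
  have "proper_colouring E (S1 \<union> S2) (chi E S1 + chi E S2) h"
    unfolding proper_colouring_def
  proof (intro conjI ballI impI)
    fix x assume "x \<in> S1 \<union> S2" then show "h x < chi E S1 + chi E S2"
      using f g by (auto simp: h_def proper_colouring_def)
  next
    fix x y assume "x \<in> S1 \<union> S2" "y \<in> S1 \<union> S2" "E x y"
    then show "h x \<noteq> h y" using f g unfolding h_def proper_colouring_def
      by (cases "x \<in> S1"; cases "y \<in> S1") force+
  qed
  then show ?thesis by (rule chi_le)
qed

lemma chi_mono: assumes "finite S" "T \<subseteq> S" shows "chi E T \<le> chi E S"
proof -
  obtain f where f: "proper_colouring E S (chi E S) f" using chi_colouring assms by blast
  then have "proper_colouring E T (chi E S) f" using assms unfolding proper_colouring_def by blast
  then show ?thesis by (rule chi_le)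
qed

lemma chi_indep: "is_indep E S \<Longrightarrow> chi E S \<le> 1"
  by (rule chi_le[of _ _ "\<lambda>_. 0"]) (auto simp: proper_colouring_def is_indep_def)

lemma omega_ge: "finite S \<Longrightarrow> C \<subseteq> S \<Longrightarrow> is_clique E C \<Longrightarrow> card C \<le> omega E S"
  unfolding omega_def by (rule Max_ge) (auto intro: finite_subset[of _ "card ` Pow S"])

lemma omega_fin: "finite S \<Longrightarrow> finite {card C | C. C \<subseteq> S \<and> is_clique E C}"
  by (rule finite_subset[of _ "card ` Pow S"]) auto

lemma omega_attained: "finite S \<Longrightarrow> \<exists>C. C \<subseteq> S \<and> is_clique E C \<and> card C = omega E S"
proof -
  assume fin: "finite S"
  have "omega E S \<in> {card C | C. C \<subseteq> S \<and> is_clique E C}"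
    unfolding omega_def by (rule Max_in) (use omega_fin[OF fin] in \<open>auto simp: is_clique_def\<close>)
  then show ?thesis by auto
qed

lemma alpha_fin: "finite S \<Longrightarrow> finite {card C | C. C \<subseteq> S \<and> is_indep E C}"
  by (rule finite_subset[of _ "card ` Pow S"]) auto

lemma alpha_ge: "finite S \<Longrightarrow> C \<subseteq> S \<Longrightarrow> is_indep E C \<Longrightarrow> card C \<le> alpha E S"
  unfolding alpha_def by (rule Max_ge) (use alpha_fin in auto)

lemma alpha_attained: "finite S \<Longrightarrow> \<exists>C. C \<subseteq> S \<and> is_indep E C \<and> card C = alpha E S"
proof -
  assume fin: "finite S"
  have "alpha E S \<in> {card C | C. C \<subseteq> S \<and> is_indep E C}"
    unfolding alpha_def by (rule Max_in) (use alpha_fin[OF fin] in \<open>auto simp: is_indep_def\<close>)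
  then show ?thesis by auto
qed

lemma omega_mono: "finite S \<Longrightarrow> T \<subseteq> S \<Longrightarrow> omega E T \<le> omega E S"
proof -
  assume a: "finite S" "T \<subseteq> S"
  obtain C where "C \<subseteq> T" "is_clique E C" "card C = omega E T" using omega_attained[of T] a finite_subset by blast
  then show ?thesis using omega_ge[of S C] a by auto
qed

lemma degree_le: "finite S \<Longrightarrow> v \<in> S \<Longrightarrow> degree E S v \<le> max_degree E S"
  unfolding max_degree_def by (rule Max_ge) auto

lemma degree_attained: "finite S \<Longrightarrow> S \<noteq> {} \<Longrightarrow> \<exists>v\<in>S. degree E S v = max_degree E S"
proof -
  assume "finite S" "S \<noteq> {}"
  then have "Max (insert 0 (degree E S ` S)) = max 0 (Max (degree E S ` S))"
    by (simp add: Max_insert)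
  also have "\<dots> = Max (degree E S ` S)" by simp
  finally have "max_degree E S \<in> degree E S ` S"
    unfolding max_degree_def using \<open>finite S\<close> \<open>S \<noteq> {}\<close> by (metis Max_in finite_imageI image_is_empty)
  then show ?thesis by auto
qed

lemma degree_mono: "finite S \<Longrightarrow> T \<subseteq> S \<Longrightarrow> degree E T v \<le> degree E S v"
  unfolding degree_def by (rule card_mono) auto

lemma max_degree_mono: "finite S \<Longrightarrow> T \<subseteq> S \<Longrightarrow> max_degree E T \<le> max_degree E S"
proof -
  assume a: "finite S" "T \<subseteq> S"
  show ?thesis
  proof (cases "T = {}")
    case True then show ?thesis by (simp add: max_degree_def)
  next
    case False
    then obtain v where "v \<in> T" "degree E T v = max_degree E T" using degree_attained[of T] a finite_subset by blast
    then show ?thesis using degree_mono[of S T v] degree_le[of S v] a by auto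
  qed
qed

end

definition nmatch :: "('a \<Rightarrow> 'a \<Rightarrow> bool) \<Rightarrow> 'a set \<Rightarrow> 'a set set \<Rightarrow> bool" where
  "nmatch E S M \<longleftrightarrow> (\<forall>e\<in>M. \<exists>x y. e = {x,y} \<and> x \<noteq> y \<and> x \<in> S \<and> y \<in> S \<and> \<not> E x y)
     \<and> (\<forall>e1\<in>M. \<forall>e2\<in>M. e1 \<noteq> e2 \<longrightarrow> e1 \<inter> e2 = {})"

context sg begin

lemma augment:
  assumes "nmatch E S M" "finite M" "X \<subseteq> M" "finite Y"
    "\<forall>e\<in>Y. \<exists>x y. e = {x,y} \<and> x \<noteq> y \<and> x \<in> S \<and> y \<in> S \<and> \<not> E x y"
    "\<forall>e1\<in>Y. \<forall>e2\<in>Y. e1 \<noteq> e2 \<longrightarrow> e1 \<inter> e2 = {}"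
    "\<forall>e\<in>Y. \<forall>e'\<in>M - X. e \<inter> e' = {}"
  shows "nmatch E S ((M - X) \<union> Y) \<and> card ((M - X) \<union> Y) = card M - card X + card Y"
proof
  have d1: "\<forall>a\<in>M. \<forall>b\<in>M. a \<noteq> b \<longrightarrow> a \<inter> b = {}" using assms(1) unfolding nmatch_def by (rule conjunct2)
  have v1: "\<forall>e\<in>M. \<exists>x y. e = {x,y} \<and> x \<noteq> y \<and> x \<in> S \<and> y \<in> S \<and> \<not> E x y" using assms(1) unfolding nmatch_def by (rule conjunct1)
  show "nmatch E S ((M - X) \<union> Y)" unfolding nmatch_def
  proof (intro conjI ballI impI)
    fix e assume "e \<in> (M - X) \<union> Y"
    then show "\<exists>x y. e = {x,y} \<and> x \<noteq> y \<and> x \<in> S \<and> y \<in> S \<and> \<not> E x y"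
    proof
      assume "e \<in> M - X" then show ?thesis using v1 by blast
    next
      assume "e \<in> Y" then show ?thesis using assms(5) by blast
    qed
  next
    fix e1 e2 assume h: "e1 \<in> (M - X) \<union> Y" "e2 \<in> (M - X) \<union> Y" "e1 \<noteq> e2"
    show "e1 \<inter> e2 = {}"
    proof (cases "e1 \<in> Y")
      case True
      show ?thesis
      proof (cases "e2 \<in> Y")
        case True2: True
        then show ?thesis using assms(6) True h(3) by blast
      next
        case False
        then have "e2 \<in> M - X" using h(2) by blast
        then show ?thesis using assms(7) True by blast
      qed
    next
      case False
      then have e1M: "e1 \<in> M - X" using h(1) by blast
      show ?thesis
      proof (cases "e2 \<in> Y")
        case True
        then have "e2 \<inter> e1 = {}" using assms(7) e1M by blast
        then show ?thesis by (simp add: Int_commute)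
      next
        case False
        then have "e2 \<in> M - X" using h(2) by blast
        then show ?thesis using d1 e1M h(3) by blast
      qed
    qed
  qed
  have "(M - X) \<inter> Y = {}"
  proof (rule ccontr)
    assume "(M - X) \<inter> Y \<noteq> {}"
    then obtain e where e: "e \<in> M - X" "e \<in> Y" by blast
    then have "e \<inter> e = {}" using assms(7) by blast
    moreover obtain x y where "e = {x,y}" using assms(5) e(2) by blast
    ultimately show False by simp
  qed
  then have "card ((M - X) \<union> Y) = card (M - X) + card Y"
    using assms by (simp add: card_Un_disjoint)
  also have "card (M - X) = card M - card X" using assms(2,3) by (simp add: card_Diff_subset finite_subset)
  finally show "card ((M - X) \<union> Y) = card M - card X + card Y" .
qed

lemma nmatch_fin: "nmatch E S M \<Longrightarrow> M \<subseteq> Pow S"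
proof -
  assume a: "nmatch E S M"
  have v: "\<forall>e\<in>M. \<exists>x y. e = {x,y} \<and> x \<noteq> y \<and> x \<in> S \<and> y \<in> S \<and> \<not> E x y"
    using a unfolding nmatch_def by (rule conjunct1)
  show "M \<subseteq> Pow S"
  proof
    fix e assume "e \<in> M"
    then obtain x y where "e = {x,y}" "x \<in> S" "y \<in> S" using v by blast
    then show "e \<in> Pow S" by simp
  qed
qed

lemma max_matching: assumes "finite S"
  shows "\<exists>M. nmatch E S M \<and> (\<forall>M'. nmatch E S M' \<longrightarrow> card M' \<le> card M)"
proof -
  let ?Ms = "{M. nmatch E S M}"
  have sub: "?Ms \<subseteq> Pow (Pow S)"
  proof
    fix M assume "M \<in> ?Ms" then have "nmatch E S M" by simp
    then show "M \<in> Pow (Pow S)" using nmatch_fin by simp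
  qed
  have fin: "finite ?Ms" by (rule finite_subset[OF sub]) (simp add: assms)
  have ne: "{} \<in> ?Ms" by (simp add: nmatch_def)
  have fin2: "finite (card ` ?Ms)" using fin by (rule finite_imageI)
  have ne2: "card ` ?Ms \<noteq> {}" using ne by blast
  have "Max (card ` ?Ms) \<in> card ` ?Ms" using fin2 ne2 by (rule Max_in)
  then obtain M where M': "Max (card ` ?Ms) = card M" "M \<in> ?Ms" by (rule imageE)
  then have M: "M \<in> ?Ms" "card M = Max (card ` ?Ms)" by auto
  have "card M' \<le> card M" if "nmatch E S M'" for M'
  proof -
    have "card M' \<in> card ` ?Ms" using that by blast
    then have "card M' \<le> Max (card ` ?Ms)" using fin2 by (rule Max_ge[rotated])
    then show ?thesis using M(2) by linarith
  qed
  then show ?thesis using M(1) by blast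
qed

end

context sg begin

lemma aug_contra:
  assumes M: "nmatch E S M" and Mmax: "\<And>M'. nmatch E S M' \<Longrightarrow> card M' \<le> card M"
    and "finite M" "X \<subseteq> M" "finite Y"
    "\<forall>e\<in>Y. \<exists>x y. e = {x,y} \<and> x \<noteq> y \<and> x \<in> S \<and> y \<in> S \<and> \<not> E x y"
    "\<forall>e1\<in>Y. \<forall>e2\<in>Y. e1 \<noteq> e2 \<longrightarrow> e1 \<inter> e2 = {}"
    "\<forall>e\<in>Y. \<forall>e'\<in>M - X. e \<inter> e' = {}"
    "card X < card Y"
  shows False
proof -
  have a: "nmatch E S ((M - X) \<union> Y) \<and> card ((M - X) \<union> Y) = card M - card X + card Y"
    by (rule augment) (use assms in auto)
  have "card X \<le> card M" using assms(3,4) by (rule card_mono)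
  then have "card ((M - X) \<union> Y) > card M" using a assms(9) by linarith
  moreover have "card ((M - X) \<union> Y) \<le> card M" using Mmax a by blast
  ultimately show False by linarith
qed

lemma card_le_via_cover: "finite A \<Longrightarrow> S \<subseteq> insert v (A \<union> B) \<Longrightarrow> finite B \<Longrightarrow> card S \<le> 1 + card A + card B"
proof -
  assume a: "finite A" "S \<subseteq> insert v (A \<union> B)" "finite B"
  have "card S \<le> card (insert v (A \<union> B))" using a by (intro card_mono) auto
  also have "\<dots> \<le> Suc (card (A \<union> B))" by (rule card_insert_le_m1) (use a in auto)
  also have "card (A \<union> B) \<le> card A + card B" by (rule card_Un_le)
  finally show ?thesis by simp
qed

end

context sg begin

lemma edgeE:
  assumes "nmatch E S M" "e \<in> M"
  obtains x y where "e = {x,y}" "x \<noteq> y" "x \<in> S" "y \<in> S" "\<not> E x y"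
proof -
  have "\<forall>e\<in>M. \<exists>x y. e = {x,y} \<and> x \<noteq> y \<and> x \<in> S \<and> y \<in> S \<and> \<not> E x y" using assms(1) unfolding nmatch_def by (rule conjunct1)
  then have "\<exists>x y. e = {x,y} \<and> x \<noteq> y \<and> x \<in> S \<and> y \<in> S \<and> \<not> E x y" using assms(2) by (rule bspec)
  then show ?thesis using that by (elim exE conjE)
qed


lemma valid1: "a \<noteq> b \<Longrightarrow> a \<in> S \<Longrightarrow> b \<in> S \<Longrightarrow> \<not> E a b \<Longrightarrow>
   \<forall>e\<in>{{a,b}}. \<exists>x y. e = {x,y} \<and> x \<noteq> y \<and> x \<in> S \<and> y \<in> S \<and> \<not> E x y"
  by blast

lemma valid2: "a \<noteq> b \<Longrightarrow> a \<in> S \<Longrightarrow> b \<in> S \<Longrightarrow> \<not> E a b \<Longrightarrow>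
   c \<noteq> d \<Longrightarrow> c \<in> S \<Longrightarrow> d \<in> S \<Longrightarrow> \<not> E c d \<Longrightarrow>
   \<forall>e\<in>{{a,b},{c,d}}. \<exists>x y. e = {x,y} \<and> x \<noteq> y \<and> x \<in> S \<and> y \<in> S \<and> \<not> E x y"
proof
  fix e assume "a \<noteq> b" "a \<in> S" "b \<in> S" "\<not> E a b" "c \<noteq> d" "c \<in> S" "d \<in> S" "\<not> E c d" "e \<in> {{a,b},{c,d}}"
  then show "\<exists>x y. e = {x,y} \<and> x \<noteq> y \<and> x \<in> S \<and> y \<in> S \<and> \<not> E x y" by blast
qed

lemma valid3: "a \<noteq> b \<Longrightarrow> a \<in> S \<Longrightarrow> b \<in> S \<Longrightarrow> \<not> E a b \<Longrightarrow>
   c \<noteq> d \<Longrightarrow> c \<in> S \<Longrightarrow> d \<in> S \<Longrightarrow> \<not> E c d \<Longrightarrow>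
   g \<noteq> h \<Longrightarrow> g \<in> S \<Longrightarrow> h \<in> S \<Longrightarrow> \<not> E g h \<Longrightarrow>
   \<forall>e\<in>{{a,b},{c,d},{g,h}}. \<exists>x y. e = {x,y} \<and> x \<noteq> y \<and> x \<in> S \<and> y \<in> S \<and> \<not> E x y"
proof
  fix e assume "a \<noteq> b" "a \<in> S" "b \<in> S" "\<not> E a b" "c \<noteq> d" "c \<in> S" "d \<in> S" "\<not> E c d"
    "g \<noteq> h" "g \<in> S" "h \<in> S" "\<not> E g h" "e \<in> {{a,b},{c,d},{g,h}}"
  then show "\<exists>x y. e = {x,y} \<and> x \<noteq> y \<and> x \<in> S \<and> y \<in> S \<and> \<not> E x y" by blast
qed

lemma pw2: "A \<inter> B = {} \<Longrightarrow> \<forall>e1\<in>{A,B}. \<forall>e2\<in>{A,B}. e1 \<noteq> e2 \<longrightarrow> e1 \<inter> e2 = {}"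
  by auto

lemma pw3: "A \<inter> B = {} \<Longrightarrow> A \<inter> C = {} \<Longrightarrow> B \<inter> C = {} \<Longrightarrow>
   \<forall>e1\<in>{A,B,C}. \<forall>e2\<in>{A,B,C}. e1 \<noteq> e2 \<longrightarrow> e1 \<inter> e2 = {}"
  by auto

lemma alpha2:
  assumes fin: "finite S" and ne: "S \<noteq> {}"
    and no3: "\<And>x y z. x \<in> S \<Longrightarrow> y \<in> S \<Longrightarrow> z \<in> S \<Longrightarrow> x \<noteq> y \<Longrightarrow> y \<noteq> z \<Longrightarrow> x \<noteq> z
               \<Longrightarrow> \<not> E x y \<Longrightarrow> \<not> E y z \<Longrightarrow> \<not> E x z \<Longrightarrow> False"
  shows "4 * chi E S \<le> 2 * omega E S + max_degree E S + card S + 1"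
proof -
  obtain M where M: "nmatch E S M" and Mmax: "\<And>M'. nmatch E S M' \<Longrightarrow> card M' \<le> card M"
    using max_matching[OF fin] by blast
  have MP: "M \<subseteq> Pow S" using nmatch_fin[OF M] .
  have finM: "finite M" using MP fin by (meson finite_Pow_iff finite_subset)
  have v1: "\<forall>e\<in>M. \<exists>x y. e = {x,y} \<and> x \<noteq> y \<and> x \<in> S \<and> y \<in> S \<and> \<not> E x y"
    using M unfolding nmatch_def by (rule conjunct1)
  have d1: "\<forall>a\<in>M. \<forall>b\<in>M. a \<noteq> b \<longrightarrow> a \<inter> b = {}"
    using M unfolding nmatch_def by (rule conjunct2)
  define W where "W = \<Union>M"
  define U where "U = S - W"
  have WS: "W \<subseteq> S" using MP unfolding W_def by blast
  have finW: "finite W" using WS fin by (rule finite_subset)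
  have finU: "finite U" using fin unfolding U_def by simp
  have card2: "card e = 2" if eM: "e \<in> M" for e
  proof -
    obtain x y where "e = {x,y}" "x \<noteq> y" using edgeE[OF M eM] by metis
    then show ?thesis by simp
  qed
  have cardW: "card W = 2 * card M"
  proof -
    have "pairwise disjnt M" using d1 unfolding pairwise_def disjnt_def by blast
    moreover have "\<And>e. e \<in> M \<Longrightarrow> finite e" using MP fin finite_subset by blast
    ultimately have "card W = sum card M" unfolding W_def by (rule card_Union_disjoint)
    also have "\<dots> = sum (\<lambda>_. 2) M" using card2 by (rule sum.cong[OF refl])
    finally show ?thesis by simp
  qed
  have cardS: "card S = card W + card U"
  proof -
    have "card U = card S - card W" unfolding U_def using finW WS by (rule card_Diff_subset)
    moreover have "card W \<le> card S" using fin WS by (rule card_mono)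
    ultimately show ?thesis by linarith
  qed
  have chiB: "chi E S \<le> card M + card U"
  proof -
    define P where "P = M \<union> (\<lambda>u. {u}) ` U"
    have finP: "finite P" unfolding P_def using finM finU by simp
    have indP: "\<forall>B\<in>P. is_indep E B"
    proof
      fix B assume "B \<in> P"
      then show "is_indep E B"
      proof (unfold P_def, elim UnE)
        assume "B \<in> M"
        then obtain x y where "B = {x,y}" "\<not> E x y" using edgeE[OF M] by metis
        then show ?thesis unfolding is_indep_def using sym irr by blast
      next
        assume "B \<in> (\<lambda>u. {u}) ` U"
        then show ?thesis unfolding is_indep_def using irr by blast
      qed
    qed
    have covP: "S \<subseteq> \<Union>P"
    proof
      fix x assume "x \<in> S"
      show "x \<in> \<Union>P"
      proof (cases "x \<in> W")
        case True then show ?thesis unfolding P_def W_def by blast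
      next
        case False then have "x \<in> U" using \<open>x \<in> S\<close> unfolding U_def by blast
        then show ?thesis unfolding P_def by blast
      qed
    qed
    obtain f where "proper_colouring E S (card P) f" using partition_colouring[OF finP indP covP] by blast
    then have "chi E S \<le> card P" by (rule chi_le)
    also have "card P \<le> card M + card ((\<lambda>u. {u}) ` U)" unfolding P_def by (rule card_Un_le)
    also have "card ((\<lambda>u. {u}) ` U) \<le> card U" by (rule card_image_le[OF finU])
    finally show ?thesis by simp
  qed
  have d1r: "a = b" if "a \<in> M" "b \<in> M" "a \<inter> b \<noteq> {}" for a b
    using d1 that by blast
  have uniq: "z1 = z2" if "{w,z1} \<in> M" "{w,z2} \<in> M" for w z1 z2
  proof -
    have "{w,z1} = {w,z2}" using d1r[OF that] by blast
    then show ?thesis by (metis doubleton_eq_iff)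
  qed
  have exm: "\<exists>z. {w,z} \<in> M" if wW: "w \<in> W" for w
  proof -
    obtain e where e: "e \<in> M" "w \<in> e" using wW unfolding W_def by blast
    then obtain x y where "e = {x,y}" using edgeE[OF M] by metis
    then show ?thesis using e by (auto simp: insert_commute)
  qed
  define mate where "mate w = (THE z. {w,z} \<in> M)" for w
  have mate: "{w, mate w} \<in> M" if "w \<in> W" for w
  proof -
    have "\<exists>!z. {w,z} \<in> M" using exm[OF that] uniq by blast
    then show ?thesis unfolding mate_def by (rule theI')
  qed
  have mate_eq: "mate w = z" if "{w,z} \<in> M" for w z
    unfolding mate_def using that uniq by blast
  have mate_props: "mate w \<noteq> w \<and> mate w \<in> W \<and> \<not> E w (mate w) \<and> \<not> E (mate w) w \<and> mate (mate w) = w \<and> w \<in> S \<and> mate w \<in> S"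
    if "w \<in> W" for w
  proof -
    have e: "{w, mate w} \<in> M" using mate[OF that] .
    obtain x y where xy: "{w, mate w} = {x,y}" "x \<noteq> y" "x \<in> S" "y \<in> S" "\<not> E x y" using edgeE[OF M e] by metis
    have xy': "(w = x \<and> mate w = y) \<or> (w = y \<and> mate w = x)" using xy(1) by (simp add: doubleton_eq_iff)
    have 1: "mate w \<noteq> w" using xy' xy(2) by auto
    have 2: "mate w \<in> W" using e unfolding W_def by blast
    have 3: "\<not> E w (mate w) \<and> \<not> E (mate w) w" using xy' xy(5) sym by auto
    have 4: "mate (mate w) = w" using e by (intro mate_eq) (simp add: insert_commute)
    have 5: "w \<in> S \<and> mate w \<in> S" using xy' xy(3,4) by auto
    show ?thesis using 1 2 3 4 5 by blast
  qed
  have edge_unique: "e = {w, mate w}" if "w \<in> W" "e \<in> M" "w \<in> e" for w e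
    using d1r[OF that(2) mate[OF that(1)]] that(3) by blast
  have mate_inj: "w1 = w2" if "w1 \<in> W" "w2 \<in> W" "mate w1 = mate w2" for w1 w2
    using mate_props[OF that(1)] mate_props[OF that(2)] that(3) by metis
  have UW: "u \<notin> W" if "u \<in> U" for u using that unfolding U_def by blast
  have US: "U \<subseteq> S" unfolding U_def by blast
  have Uclique: "E u1 u2" if "u1 \<in> U" "u2 \<in> U" "u1 \<noteq> u2" for u1 u2
  proof (rule ccontr)
    assume ne12: "\<not> E u1 u2"
    show False
    proof (rule aug_contra[OF M Mmax finM, of "{}" "{{u1,u2}}"])
      show "\<forall>e\<in>{{u1, u2}}. \<exists>x y. e = {x, y} \<and> x \<noteq> y \<and> x \<in> S \<and> y \<in> S \<and> \<not> E x y"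
        using that ne12 US by blast
      show "\<forall>e\<in>{{u1, u2}}. \<forall>e'\<in>M - {}. e \<inter> e' = {}"
        using UW[OF that(1)] UW[OF that(2)] unfolding W_def by blast
    qed auto
  qed
  have genavoid: "\<forall>e\<in>Y. \<forall>e'\<in>M - X. e \<inter> e' = {}" if "X \<subseteq> M" "\<Union>Y \<subseteq> U \<union> \<Union>X" for X Y
  proof (intro ballI)
    fix e e' assume e: "e \<in> Y" and e': "e' \<in> M - X"
    show "e \<inter> e' = {}"
    proof (rule ccontr)
      assume "e \<inter> e' \<noteq> {}"
      then obtain z where z: "z \<in> e" "z \<in> e'" by blast
      then have "z \<in> U \<union> \<Union>X" using e that(2) by blast
      then show False
      proof
        assume "z \<in> U" then show False using z(2) e' UW unfolding W_def by blast
      next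
        assume "z \<in> \<Union>X"
        then obtain x where x: "x \<in> X" "z \<in> x" by blast
        have "x = e'" using d1r[of x e'] x that(1) e' z(2) by blast
        then show False using x(1) e' by blast
      qed
    qed
  qed
  have Sbound: "card S \<le> 1 + degree E S v + card {w\<in>S. w \<noteq> v \<and> \<not> E v w}" if vS: "v \<in> S" for v
  proof -
    have cov: "S \<subseteq> insert v ({u\<in>S. E v u} \<union> {w\<in>S. w \<noteq> v \<and> \<not> E v w})" by blast
    have "card S \<le> 1 + card {u\<in>S. E v u} + card {w\<in>S. w \<noteq> v \<and> \<not> E v w}"
      by (rule card_le_via_cover[OF _ cov]) (use fin in auto)
    then show ?thesis unfolding degree_def .
  qed
  have Nclique: "is_clique E {w\<in>S. w \<noteq> v \<and> \<not> E v w}" if vS: "v \<in> S" for v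
    unfolding is_clique_def
  proof (intro ballI impI)
    fix w1 w2 assume w: "w1 \<in> {w\<in>S. w \<noteq> v \<and> \<not> E v w}" "w2 \<in> {w\<in>S. w \<noteq> v \<and> \<not> E v w}" "w1 \<noteq> w2"
    show "E w1 w2"
    proof (rule ccontr)
      assume "\<not> E w1 w2"
      then show False using no3[of v w1 w2] w vS by auto
    qed
  qed
  have Nsmall: "card {w\<in>S. w \<noteq> v \<and> \<not> E v w} \<le> omega E S" if vS: "v \<in> S" for v
    using omega_ge[OF fin _ Nclique[OF vS]] by blast
  show ?thesis
  proof (cases "U = {}")
    case True
    obtain v where v: "v \<in> S" using ne by blast
    have "card S \<le> 1 + max_degree E S + omega E S"
      using Sbound[OF v] Nsmall[OF v] degree_le[OF fin v] by linarith
    moreover have "card S = 2 * card M" using cardS cardW True by simp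
    moreover have "chi E S \<le> card M" using chiB True by simp
    ultimately show ?thesis by linarith
  next
    case False
    then obtain u where u: "u \<in> U" by blast
    have uS: "u \<in> S" and uW: "u \<notin> W" using u unfolding U_def by auto
    define Nu where "Nu = {w\<in>S. w \<noteq> u \<and> \<not> E u w}"
    define Np where "Np = {w\<in>Nu. \<forall>u'\<in>U. u' \<noteq> u \<longrightarrow> E w u'}"
    have finNu: "finite Nu" unfolding Nu_def using fin by simp
    have NpNu: "Np \<subseteq> Nu" unfolding Np_def by blast
    have NuW: "Nu \<subseteq> W"
    proof
      fix w assume w: "w \<in> Nu"
      show "w \<in> W"
      proof (rule ccontr)
        assume "w \<notin> W"
        then have "w \<in> U" using w unfolding Nu_def U_def by blast
        then have "E u w" using Uclique[OF u] w unfolding Nu_def by blast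
        then show False using w unfolding Nu_def by blast
      qed
    qed
    have NuS: "Nu \<subseteq> S" unfolding Nu_def by blast
    have Nucl: "E w1 w2" if "w1 \<in> Nu" "w2 \<in> Nu" "w1 \<noteq> w2" for w1 w2
      using Nclique[OF uS] that unfolding is_clique_def Nu_def by blast
    have C1: "E (mate t) u'" if t: "t \<in> Nu" and u': "u' \<in> U" for t u'
    proof (rule ccontr)
      assume nE: "\<not> E (mate t) u'"
      have tW: "t \<in> W" using NuW t by blast
      note mp = mate_props[OF tW]
      have u'W: "u' \<notin> W" using UW[OF u'] .
      have u'S: "u' \<in> S" using u' US by blast
      have tS: "t \<in> S" and nut: "\<not> E u t" using t unfolding Nu_def by auto
      have d: "u \<noteq> t" "u \<noteq> mate t" "u' \<noteq> t" "u' \<noteq> mate t" "t \<noteq> mate t"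
        using uW u'W tW mp by auto
      show False
      proof (cases "u' = u")
        case True
        show False
          by (rule no3[of u t "mate t"]) (use uS tS mp d nut nE True sym in auto)
      next
        case False
        show False
        proof (rule aug_contra[OF M Mmax finM, of "{{t, mate t}}" "{{u,t},{mate t,u'}}"])
          show X: "{{t, mate t}} \<subseteq> M" using mate[OF tW] by simp
          show "finite {{u,t},{mate t,u'}}" by simp
          show "\<forall>e\<in>{{u,t},{mate t,u'}}. \<exists>x y. e = {x,y} \<and> x \<noteq> y \<and> x \<in> S \<and> y \<in> S \<and> \<not> E x y"
            by (rule valid2) (use d uS tS mp u'S nut nE in auto)
          show "\<forall>e1\<in>{{u,t},{mate t,u'}}. \<forall>e2\<in>{{u,t},{mate t,u'}}. e1 \<noteq> e2 \<longrightarrow> e1 \<inter> e2 = {}"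
            by (rule pw2) (use d False in auto)
          show "\<forall>e\<in>{{u,t},{mate t,u'}}. \<forall>e'\<in>M - {{t, mate t}}. e \<inter> e' = {}"
            by (rule genavoid[OF X]) (use u u' in auto)
          show "card {{t, mate t}} < card {{u,t},{mate t,u'}}"
            using d False by (simp add: doubleton_eq_iff)
        qed
      qed
    qed
    have C2: "E (mate t1) (mate t2)" if t1: "t1 \<in> Nu - Np" and t2: "t2 \<in> Nu" and t12: "t1 \<noteq> t2" for t1 t2
    proof (rule ccontr)
      assume nE: "\<not> E (mate t1) (mate t2)"
      have t1W: "t1 \<in> W" using NuW t1 by blast
      have t2W: "t2 \<in> W" using NuW t2 by blast
      note mp1 = mate_props[OF t1W]
      note mp2 = mate_props[OF t2W]
      have t1S: "t1 \<in> S" and nut1: "\<not> E u t1" using t1 unfolding Nu_def by auto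
      have t2S: "t2 \<in> S" and nut2: "\<not> E u t2" using t2 unfolding Nu_def by auto
      obtain u1 where u1: "u1 \<in> U" "u1 \<noteq> u" "\<not> E t1 u1" using t1 unfolding Np_def by blast
      have u1W: "u1 \<notin> W" using UW[OF u1(1)] .
      have u1S: "u1 \<in> S" using u1(1) US by blast
      have e12: "E t1 t2" using Nucl t1 t2 t12 by blast
      have a1: "t2 \<noteq> mate t1" using e12 mp1 by auto
      have a2: "t1 \<noteq> mate t2" using e12 mp2 sym by auto
      have a3: "mate t1 \<noteq> mate t2" using mate_inj t1W t2W t12 by blast
      have d: "u \<noteq> t1" "u \<noteq> t2" "u \<noteq> mate t1" "u \<noteq> mate t2"
              "u1 \<noteq> t1" "u1 \<noteq> t2" "u1 \<noteq> mate t1" "u1 \<noteq> mate t2"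
        using uW u1W t1W t2W mp1 mp2 by auto
      show False
      proof (rule aug_contra[OF M Mmax finM, of "{{t1, mate t1},{t2, mate t2}}" "{{u1,t1},{mate t1,mate t2},{t2,u}}"])
        show X: "{{t1, mate t1},{t2, mate t2}} \<subseteq> M" using mate[OF t1W] mate[OF t2W] by simp
        show "finite {{u1,t1},{mate t1,mate t2},{t2,u}}" by simp
        show "\<forall>e\<in>{{u1,t1},{mate t1,mate t2},{t2,u}}. \<exists>x y. e = {x,y} \<and> x \<noteq> y \<and> x \<in> S \<and> y \<in> S \<and> \<not> E x y"
          by (rule valid3) (use d a3 uS u1S t1S t2S mp1 mp2 u1 nut2 nE sym in auto)
        show "\<forall>e1\<in>{{u1,t1},{mate t1,mate t2},{t2,u}}. \<forall>e2\<in>{{u1,t1},{mate t1,mate t2},{t2,u}}. e1 \<noteq> e2 \<longrightarrow> e1 \<inter> e2 = {}"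
          by (rule pw3) (use d a1 a2 a3 t12 u1 mp1 mp2 in auto)
        show "\<forall>e\<in>{{u1,t1},{mate t1,mate t2},{t2,u}}. \<forall>e'\<in>M - {{t1, mate t1},{t2, mate t2}}. e \<inter> e' = {}"
          by (rule genavoid[OF X]) (use u u1 in auto)
        have cX: "card {{t1, mate t1},{t2, mate t2}} = 2" using t12 a2 by (simp add: doubleton_eq_iff)
        have cY: "card {{u1,t1},{mate t1,mate t2},{t2,u}} = 3" using d t12 a1 a2 a3 u1 mp1 mp2 by (simp add: doubleton_eq_iff)
        show "card {{t1, mate t1},{t2, mate t2}} < card {{u1,t1},{mate t1,mate t2},{t2,u}}"
          using cX cY by simp
      qed
    qed
    have k1: "card U \<ge> 1" using u finU by (metis One_nat_def Suc_leI card_gt_0_iff empty_iff)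
    have Sb: "card S \<le> 1 + max_degree E S + card Nu"
      using Sbound[OF uS] degree_le[OF fin uS] unfolding Nu_def by linarith
    define Set2 where "Set2 = (U - {u}) \<union> Np"
    have Set2cl: "is_clique E Set2" unfolding is_clique_def
    proof (intro ballI impI)
      fix a b assume a: "a \<in> Set2" and b: "b \<in> Set2" and ab: "a \<noteq> b"
      show "E a b"
      proof (cases "a \<in> Np")
        case aN: True
        show ?thesis
        proof (cases "b \<in> Np")
          case True then show ?thesis using aN ab Nucl NpNu by blast
        next
          case False then have "b \<in> U - {u}" using b unfolding Set2_def by blast
          then show ?thesis using aN unfolding Np_def by blast
        qed
      next
        case aN: False
        then have aU: "a \<in> U - {u}" using a unfolding Set2_def by blast
        show ?thesis
        proof (cases "b \<in> Np")
          case True then have "E b a" using aU unfolding Np_def by blast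
          then show ?thesis using sym by blast
        next
          case False then have "b \<in> U - {u}" using b unfolding Set2_def by blast
          then show ?thesis using aU ab Uclique by blast
        qed
      qed
    qed
    have Set2S: "Set2 \<subseteq> S" unfolding Set2_def using US NpNu NuS by blast
    have cSet2: "card Set2 + 1 = card U + card Np"
    proof -
      have disj: "(U - {u}) \<inter> Np = {}" using NpNu NuW UW by blast
      have "card Set2 = card (U - {u}) + card Np" unfolding Set2_def
        by (rule card_Un_disjoint) (use finU finNu NpNu finite_subset disj in auto)
      moreover have "card (U - {u}) + 1 = card U" using u finU k1 by (simp add: card_Diff_singleton)
      ultimately show ?thesis by linarith
    qed
    define T where "T = (if Np = {} then Nu else insert (SOME w. w \<in> Np) (Nu - Np))"
    have TNu: "T \<subseteq> Nu" unfolding T_def using NpNu by (auto intro: someI)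
    have Tnp: "t1 \<in> Nu - Np \<or> t2 \<in> Nu - Np" if "t1 \<in> T" "t2 \<in> T" "t1 \<noteq> t2" for t1 t2
      using that unfolding T_def by (auto split: if_splits)
    have finT: "finite T" using TNu finNu finite_subset by blast
    have TW: "T \<subseteq> W" using TNu NuW by blast
    define Set1 where "Set1 = U \<union> mate ` T"
    have Set1cl: "is_clique E Set1" unfolding is_clique_def
    proof (intro ballI impI)
      fix a b assume a: "a \<in> Set1" and b: "b \<in> Set1" and ab: "a \<noteq> b"
      show "E a b"
      proof (cases "a \<in> U")
        case aU: True
        show ?thesis
        proof (cases "b \<in> U")
          case True then show ?thesis using aU ab Uclique by blast
        next
          case False then obtain t where "t \<in> T" "b = mate t" using b unfolding Set1_def by blast
          then have "E b a" using C1 TNu aU by blast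
          then show ?thesis using sym by blast
        qed
      next
        case aU: False
        then obtain t1 where t1: "t1 \<in> T" "a = mate t1" using a unfolding Set1_def by blast
        show ?thesis
        proof (cases "b \<in> U")
          case True then show ?thesis using C1 TNu t1 by blast
        next
          case False then obtain t2 where t2: "t2 \<in> T" "b = mate t2" using b unfolding Set1_def by blast
          have "t1 \<noteq> t2" using t1 t2 ab by blast
          then have "t1 \<in> Nu - Np \<or> t2 \<in> Nu - Np" using Tnp t1 t2 by blast
          then show ?thesis
          proof
            assume "t1 \<in> Nu - Np" then show ?thesis using C2 t1 t2 TNu \<open>t1 \<noteq> t2\<close> by blast
          next
            assume h: "t2 \<in> Nu - Np"
            have "t1 \<in> Nu" using t1 TNu by blast
            then have "E (mate t2) (mate t1)" using C2[OF h] \<open>t1 \<noteq> t2\<close> by blast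
            then have "E b a" using t1 t2 by simp
            then show ?thesis using sym by blast
          qed
        qed
      qed
    qed
    have Set1S: "Set1 \<subseteq> S" unfolding Set1_def using US TW mate_props by blast
    have cSet1: "card Set1 = card U + card T"
    proof -
      have inj: "inj_on mate T" using mate_inj TW unfolding inj_on_def by blast
      have disj: "U \<inter> mate ` T = {}" using TW mate_props UW by blast
      have "card Set1 = card U + card (mate ` T)" unfolding Set1_def
        by (rule card_Un_disjoint) (use finU finT disj in auto)
      moreover have "card (mate ` T) = card T" using inj by (rule card_image)
      ultimately show ?thesis by simp
    qed
    have o1: "card Set1 \<le> omega E S" using omega_ge[OF fin Set1S Set1cl] .
    have o2: "card Set2 \<le> omega E S" using omega_ge[OF fin Set2S Set2cl] .
    have key: "2 * card U + card Nu \<le> 2 * omega E S"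
    proof (cases "Np = {}")
      case True
      then have "card T = card Nu" unfolding T_def by simp
      then show ?thesis using o1 cSet1 by linarith
    next
      case False
      then have w0: "(SOME w. w \<in> Np) \<in> Np" by (meson ex_in_conv someI)
      have "card T = Suc (card (Nu - Np))" unfolding T_def using False w0 finNu by simp
      moreover have "card (Nu - Np) + card Np = card Nu" using NpNu finNu
        by (metis card_Diff_subset card_mono finite_subset le_add_diff_inverse2)
      ultimately have "card T + card Np = card Nu + 1" by linarith
      then show ?thesis using o1 o2 cSet1 cSet2 by linarith
    qed
    show ?thesis using key Sb chiB cardS cardW by linarith
  qed
qed
end

context sg begin

lemma chi_empty: "chi E {} = 0"
proof -
  have "proper_colouring E {} 0 (\<lambda>_. 0)" by (simp add: proper_colouring_def)
  then show ?thesis using chi_le by fastforce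
qed

lemma alpha_empty: "alpha E {} = 0"
  using alpha_attained[of "{}"] by auto

lemma mainL: "finite S \<Longrightarrow> 4 * chi E S + max (alpha E S) 3 \<le> 2 * omega E S + max_degree E S + card S + 4"
proof (induction "card S" arbitrary: S rule: less_induct)
  case less
  note fin = less.prems
  show ?case
  proof (cases "S = {}")
    case True
    then show ?thesis by (simp add: chi_empty alpha_empty)
  next
    case ne: False
    show ?thesis
    proof (cases "alpha E S \<le> 2")
      case True
      have no3: False if "x \<in> S" "y \<in> S" "z \<in> S" "x \<noteq> y" "y \<noteq> z" "x \<noteq> z"
               "\<not> E x y" "\<not> E y z" "\<not> E x z" for x y z
      proof -
        have "is_indep E {x,y,z}" unfolding is_indep_def
        proof (intro ballI)
          fix a b assume "a \<in> {x,y,z}" "b \<in> {x,y,z}"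
          then show "\<not> E a b" using that(7,8,9) sym irr by auto
        qed
        moreover have "{x,y,z} \<subseteq> S" using that by blast
        ultimately have "card {x,y,z} \<le> alpha E S" using alpha_ge[OF fin] by blast
        moreover have "card {x,y,z} = 3" using that by simp
        ultimately show False using True by linarith
      qed
      have "4 * chi E S \<le> 2 * omega E S + max_degree E S + card S + 1"
        by (rule alpha2[OF fin ne]) (rule no3)
      then show ?thesis using True by simp
    next
      case False
      obtain I where I: "I \<subseteq> S" "is_indep E I" "card I = alpha E S" using alpha_attained[OF fin] by blast
      have Ine: "I \<noteq> {}" using I(3) False by auto
      define S' where "S' = S - I"
      have finS': "finite S'" unfolding S'_def using fin by simp
      have finI: "finite I" using I(1) fin finite_subset by blast
      have cS': "card S' = card S - alpha E S" unfolding S'_def using card_Diff_subset[OF finI I(1)] I(3) by simp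
      have aS: "alpha E S \<le> card S" using I(1,3) card_mono[OF fin] by metis
      have chiI: "chi E I \<le> 1" using chi_indep[OF I(2)] .
      show ?thesis
      proof (cases "S' = {}")
        case True
        then have SI: "S = I" unfolding S'_def using I(1) by blast
        obtain x where x: "x \<in> S" using ne by blast
        have "card {x} \<le> omega E S" by (rule omega_ge[OF fin]) (use x in \<open>auto simp: is_clique_def\<close>)
        then have "1 \<le> omega E S" by simp
        then show ?thesis using chiI SI I(3) False by simp
      next
        case ne': False
        have lt: "card S' < card S"
        proof (rule psubset_card_mono[OF fin])
          obtain i where "i \<in> I" using Ine by blast
          then have "i \<in> S" "i \<notin> S'" using I(1) unfolding S'_def by auto
          then show "S' \<subset> S" unfolding S'_def by blast
        qed
        have IH: "4 * chi E S' + max (alpha E S') 3 \<le> 2 * omega E S' + max_degree E S' + card S' + 4"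
          using less.hyps[OF lt finS'] .
        have chiS: "chi E S \<le> chi E S' + 1"
        proof -
          have "S = S' \<union> I" unfolding S'_def using I(1) by blast
          then have "chi E S \<le> chi E S' + chi E I" using chi_union[OF finS' finI] by simp
          then show ?thesis using chiI by linarith
        qed
        have omS: "omega E S' \<le> omega E S" using omega_mono[OF fin] unfolding S'_def by blast
        have DS: "max_degree E S' + 1 \<le> max_degree E S"
        proof -
          obtain v where v: "v \<in> S'" "degree E S' v = max_degree E S'" using degree_attained[OF finS' ne'] by blast
          have "\<exists>w\<in>I. E v w"
          proof (rule ccontr)
            assume "\<not> (\<exists>w\<in>I. E v w)"
            then have "is_indep E (insert v I)" using I(2) sym irr unfolding is_indep_def by blast
            moreover have "insert v I \<subseteq> S" using v(1) I(1) unfolding S'_def by blast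
            ultimately have "card (insert v I) \<le> alpha E S" using alpha_ge[OF fin] by blast
            moreover have "card (insert v I) = card I + 1" using v(1) finI unfolding S'_def by simp
            ultimately show False using I(3) by linarith
          qed
          then obtain w where w: "w \<in> I" "E v w" by blast
          have "insert w {u\<in>S'. E v u} \<subseteq> {u\<in>S. E v u}" using w I(1) unfolding S'_def by blast
          then have "card (insert w {u\<in>S'. E v u}) \<le> degree E S v" unfolding degree_def
            by (rule card_mono[rotated]) (use fin in simp)
          moreover have "card (insert w {u\<in>S'. E v u}) = degree E S' v + 1"
          proof -
            have "w \<notin> {u\<in>S'. E v u}" using w(1) unfolding S'_def by blast
            moreover have "finite {u\<in>S'. E v u}" using finS' by simp
            ultimately show ?thesis unfolding degree_def by simp
          qed
          moreover have "degree E S v \<le> max_degree E S" using degree_le[OF fin] v(1) unfolding S'_def by blast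
          ultimately show ?thesis using v(2) by linarith
        qed
        have "3 \<le> max (alpha E S') 3" by simp
        then show ?thesis using IH chiS omS DS cS' aS False by simp
      qed
    qed
  qed
qed

end

lemma connected_extend:
  assumes "connected_in R S x z" "z' \<in> S" "R z z'"
  shows "connected_in R S x z'"
proof -
  obtain p where p: "p \<noteq> []" "hd p = x" "last p = z" "set p \<subseteq> S"
    "\<forall>i < length p - 1. R (p ! i) (p ! Suc i)" using assms(1) unfolding connected_in_def by blast
  define q where "q = p @ [z']"
  have "q \<noteq> []" "hd q = x" "last q = z'" "set q \<subseteq> S" using p assms(2) unfolding q_def by auto
  moreover have "\<forall>i < length q - 1. R (q ! i) (q ! Suc i)"
  proof (intro allI impI)
    fix i assume i: "i < length q - 1"
    then have il: "i < length p" unfolding q_def by simp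
    show "R (q ! i) (q ! Suc i)"
    proof (cases "i < length p - 1")
      case True
      then have "Suc i < length p" by simp
      then show ?thesis using p(5) True unfolding q_def by (simp add: nth_append)
    next
      case False
      then have ieq: "i = length p - 1" using il by simp
      have "q ! i = last p" using p(1) ieq unfolding q_def by (simp add: nth_append last_conv_nth)
      moreover have "q ! Suc i = z'" using p(1) ieq unfolding q_def by (simp add: nth_append)
      ultimately show ?thesis using p(3) assms(3) by simp
    qed
  qed
  ultimately show ?thesis unfolding connected_in_def by blast
qed

lemma final_arith: "4 * (c::real) + aV \<le> 2 * w + 2 * D + 5 + 4 * cK + aK \<Longrightarrow>
   c \<le> (w + D + 1) / 2 + (4 * cK + aK + 3 - aV) / 4"
  by (simp add: field_simps)

lemma connected_refl: "x \<in> S \<Longrightarrow> connected_in R S x x"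
  unfolding connected_in_def by (rule exI[of _ "[x]"]) simp

theorem corollary6:
  fixes V :: "'a set" and E :: "'a \<Rightarrow> 'a \<Rightarrow> bool" and K :: "'a set"
  assumes "simple_graph V E"
    and "compl_cutset V E K"
  shows "real (chi E V) \<le> (real (omega E V) + real (max_degree E V) + 1) / 2
           + (4 * real (chi E K) + real (alpha E K) + 3 - real (alpha E V)) / 4"
proof -
  have finV: "finite V" and symE: "\<And>x y. E x y \<Longrightarrow> E y x" and irrE: "\<And>x. \<not> E x x"
    using assms(1) unfolding simple_graph_def by auto
  interpret sg E using symE irrE by unfold_locales
  have KV: "K \<subseteq> V" using assms(2) unfolding compl_cutset_def by blast
  obtain x y where xy: "x \<in> V - K" "y \<in> V - K" "\<not> connected_in (compl_adj E) (V - K) x y"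
    using assms(2) unfolding compl_cutset_def disconnected_in_def by blast
  define A where "A = {z \<in> V - K. connected_in (compl_adj E) (V - K) x z}"
  define B where "B = (V - K) - A"
  have "connected_in (compl_adj E) (V - K) x x" using xy(1) by (rule connected_refl)
  then have xA: "x \<in> A" unfolding A_def using xy(1) by simp
  have yB: "y \<in> B" unfolding B_def A_def using xy by simp
  have cross: "E a b" if a: "a \<in> A" and b: "b \<in> B" for a b
  proof (rule ccontr)
    assume nE: "\<not> E a b"
    have "a \<noteq> b" using a b unfolding B_def by blast
    then have cadj: "compl_adj E a b" using nE unfolding compl_adj_def by blast
    have conn: "connected_in (compl_adj E) (V - K) x a" using a unfolding A_def by blast
    have "b \<in> V - K" using b unfolding B_def by blast
    have "connected_in (compl_adj E) (V - K) x b" by (rule connected_extend[OF conn \<open>b \<in> V - K\<close> cadj])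
    then have "b \<in> A" unfolding A_def using \<open>b \<in> V - K\<close> by blast
    then show False using b unfolding B_def by blast
  qed
  have AV: "A \<subseteq> V" and BV: "B \<subseteq> V" unfolding A_def B_def by auto
  have finA: "finite A" using AV finV by (rule finite_subset)
  have finB: "finite B" using BV finV by (rule finite_subset)
  have finK: "finite K" using KV finV by (rule finite_subset)
  have AB: "A \<inter> B = {}" unfolding B_def by blast
  have Vdec: "V = K \<union> (A \<union> B)" using KV unfolding A_def B_def by blast
  have Ane: "A \<noteq> {}" and Bne: "B \<noteq> {}" using xA yB by auto
  have chiV: "chi E V \<le> chi E K + (chi E A + chi E B)"
  proof -
    have "chi E V \<le> chi E K + chi E (A \<union> B)" using chi_union[OF finK] finA finB Vdec by simp
    moreover have "chi E (A \<union> B) \<le> chi E A + chi E B" using chi_union[OF finA finB] .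
    ultimately show ?thesis by linarith
  qed
  have omV: "omega E A + omega E B \<le> omega E V"
  proof -
    obtain CA where CA: "CA \<subseteq> A" "is_clique E CA" "card CA = omega E A" using omega_attained[OF finA] by blast
    obtain CB where CB: "CB \<subseteq> B" "is_clique E CB" "card CB = omega E B" using omega_attained[OF finB] by blast
    have cl: "is_clique E (CA \<union> CB)" unfolding is_clique_def
    proof (intro ballI impI)
      fix a b assume a: "a \<in> CA \<union> CB" and b: "b \<in> CA \<union> CB" and ab: "a \<noteq> b"
      show "E a b"
      proof (cases "a \<in> CA")
        case aA: True
        show ?thesis
        proof (cases "b \<in> CA")
          case True then show ?thesis using CA(2) aA ab unfolding is_clique_def by blast
        next
          case False then have "b \<in> CB" using b by blast
          then show ?thesis using cross CA(1) CB(1) aA by blast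
        qed
      next
        case aA: False
        then have aB: "a \<in> CB" using a by blast
        show ?thesis
        proof (cases "b \<in> CA")
          case True then have "E b a" using cross CA(1) CB(1) aB by blast
          then show ?thesis using sym by blast
        next
          case False then have "b \<in> CB" using b by blast
          then show ?thesis using CB(2) aB ab unfolding is_clique_def by blast
        qed
      qed
    qed
    have "card (CA \<union> CB) \<le> omega E V" using omega_ge[OF finV _ cl] CA(1) CB(1) AV BV by blast
    moreover have "card (CA \<union> CB) = card CA + card CB"
      by (rule card_Un_disjoint) (use CA(1) CB(1) finA finB finite_subset AB in auto)
    ultimately show ?thesis using CA(3) CB(3) by linarith
  qed
  have degA: "max_degree E A + card B \<le> max_degree E V"
  proof -
    obtain v where v: "v \<in> A" "degree E A v = max_degree E A" using degree_attained[OF finA Ane] by blast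
    have sub: "{u\<in>A. E v u} \<union> B \<subseteq> {u\<in>V. E v u}" using AV BV cross v(1) by blast
    have "card ({u\<in>A. E v u} \<union> B) = card {u\<in>A. E v u} + card B"
      by (rule card_Un_disjoint) (use finA finB AB in auto)
    moreover have "card ({u\<in>A. E v u} \<union> B) \<le> card {u\<in>V. E v u}"
      by (rule card_mono[OF _ sub]) (use finV in simp)
    moreover have "degree E V v \<le> max_degree E V" using degree_le[OF finV] v(1) AV by blast
    ultimately show ?thesis using v(2) unfolding degree_def by linarith
  qed
  have degB: "max_degree E B + card A \<le> max_degree E V"
  proof -
    obtain v where v: "v \<in> B" "degree E B v = max_degree E B" using degree_attained[OF finB Bne] by blast
    have sub: "{u\<in>B. E v u} \<union> A \<subseteq> {u\<in>V. E v u}" using AV BV cross v(1) sym by blast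
    have "card ({u\<in>B. E v u} \<union> A) = card {u\<in>B. E v u} + card A"
      by (rule card_Un_disjoint) (use finA finB AB in auto)
    moreover have "card ({u\<in>B. E v u} \<union> A) \<le> card {u\<in>V. E v u}"
      by (rule card_mono[OF _ sub]) (use finV in simp)
    moreover have "degree E V v \<le> max_degree E V" using degree_le[OF finV] v(1) BV by blast
    ultimately show ?thesis using v(2) unfolding degree_def by linarith
  qed
  have alV: "alpha E V \<le> alpha E K + max (alpha E A) (alpha E B)"
  proof -
    obtain I where I: "I \<subseteq> V" "is_indep E I" "card I = alpha E V" using alpha_attained[OF finV] by blast
    have finI: "finite I" using I(1) finV finite_subset by blast
    have Isplit: "I = (I \<inter> K) \<union> (I \<inter> (A \<union> B))" using I(1) Vdec by blast
    have "card I \<le> card (I \<inter> K) + card (I \<inter> (A \<union> B))"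
      using card_Un_le[of "I \<inter> K" "I \<inter> (A \<union> B)"] unfolding Isplit[symmetric] .
    moreover have "card (I \<inter> K) \<le> alpha E K"
      by (rule alpha_ge[OF finK]) (use I(2) in \<open>auto simp: is_indep_def\<close>)
    moreover have "card (I \<inter> (A \<union> B)) \<le> max (alpha E A) (alpha E B)"
    proof (cases "I \<inter> A = {}")
      case True
      then have "I \<inter> (A \<union> B) = I \<inter> B" by blast
      moreover have "card (I \<inter> B) \<le> alpha E B"
        by (rule alpha_ge[OF finB]) (use I(2) in \<open>auto simp: is_indep_def\<close>)
      ultimately show ?thesis by simp
    next
      case False
      then obtain a where a: "a \<in> I" "a \<in> A" by blast
      have "I \<inter> B = {}"
      proof (rule ccontr)
        assume "I \<inter> B \<noteq> {}"
        then obtain b where "b \<in> I" "b \<in> B" by blast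
        then show False using cross[OF a(2)] a(1) I(2) unfolding is_indep_def by blast
      qed
      then have "I \<inter> (A \<union> B) = I \<inter> A" by blast
      moreover have "card (I \<inter> A) \<le> alpha E A"
        by (rule alpha_ge[OF finA]) (use I(2) in \<open>auto simp: is_indep_def\<close>)
      ultimately show ?thesis by simp
    qed
    ultimately show ?thesis using I(3) by linarith
  qed
  have LA: "4 * chi E A + max (alpha E A) 3 \<le> 2 * omega E A + max_degree E A + card A + 4"
    using mainL[OF finA] .
  have LB: "4 * chi E B + max (alpha E B) 3 \<le> 2 * omega E B + max_degree E B + card B + 4"
    using mainL[OF finB] .
  have mx: "max (alpha E A) (alpha E B) + 3 \<le> max (alpha E A) 3 + max (alpha E B) 3"
    by (simp add: max_def)
  have nat_ineq: "4 * chi E V + alpha E V \<le> 2 * omega E V + 2 * max_degree E V + 5 + 4 * chi E K + alpha E K"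
    using chiV omV degA degB alV LA LB mx by linarith
  then have "real (4 * chi E V + alpha E V) \<le> real (2 * omega E V + 2 * max_degree E V + 5 + 4 * chi E K + alpha E K)"
    by (simp only: of_nat_le_iff)
  then have "4 * real (chi E V) + real (alpha E V) \<le> 2 * real (omega E V) + 2 * real (max_degree E V) + 5 + 4 * real (chi E K) + real (alpha E K)"
    by simp
  then show ?thesis by (rule final_arith)
qed

end
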